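(* Assume the network is regular. Let $j^*\in\mathcal E$. (i) $j^*\leadsto j^*$ holds if and only if there exists a child selection $J:\mathcal M\to\mathcal E$ with $j^*\notin J(\mathcal M)$ such that $J(\mathcal M)$ selects an $S$-basis. (ii) For $j'\in\mathcal E$ with $j'\neq j^*$: $j^*\leadsto j'$ holds if and only if there exists a child selection $J:\mathcal M\to\mathcal E$ with $j^*\notin J(\mathcal M)$ and $j'\in J(\mathcal M)$ such that the swapped set $\{j^*\}\cup J(\mathcal M)\setminus\{j'\}$ selects an $S$-basis.
   Context: A reaction network consists of a finite set of metabolites $\mathcal M=\{1,\dots,M\}$ and a finite set of reactions $\mathcal E=\{1,\dots,E\}$. Each reaction $j$ has an input stoichiometric vector $y^j\in\mathbb R_{\ge0}^M$ and an output stoichiometric vector $\bar y^j\in\mathbb R_{\ge0}^M$. Write $m\vdash j$ iff $y^j_m\neq 0$. The stoichiometric matrix $S$ is the real $M\times E$ matrix whose $j$-th column is $S^j=\bar y^j-y^j$; it is assumed to have full rank $M$. The rate matrix $R=(r_{jm})$ is the $E\times M$ matrix whose entries $r_{jm}$ with $m\vdash j$ are independent indeterminates, and $r_{jm}=0$ whenever $m\not\vdash j$. "Nonzero algebraically" means nonzero as a polynomial/rational function in these indeterminates. For $\mathcal E'\subseteq\mathcal E$, $S^{\mathcal E'}$ denotes the submatrix of columns indexed by $\mathcal E'$; $\mathcal E'$ selects an $S$-basis if $|\mathcal E'|=M$ and $\det S^{\mathcal E'}\neq0$. A child selection is an injective map $J:\mathcal M\to\mathcal E$ with $m\vdash J(m)$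 for all $m$. The network is regular if $\det(SR)\ne0$ algebraically. Let $B=\begin{pmatrix}-\mathrm{id}_{\mathcal E}&R\\ S&0\end{pmatrix}$, a square matrix with rows and columns indexed by the disjoint union $\mathcal E\sqcup\mathcal M$; for a regular network it is invertible over the field of rational functions in the $r_{jm}$. For $\alpha\in\mathcal E\sqcup\mathcal M$ set $z^\alpha=-B^{-1}e_\alpha$, and write $\alpha\leadsto\beta$ ("$\alpha$ influences $\beta$") for $\beta\in\mathcal E\sqcup\mathcal M$ if the component $z^\alpha_\beta$ is nonzero algebraically. (For $j^*\in\mathcal E$ one has $z^{j^*}=(\Phi^{j^*},\delta x^{j^*})$ with $\delta x^{j^*}=-(SR)^{-1}Se_{j^*}$ the linearized steady-state concentration response and $\Phi^{j^*}=e_{j^*}+R\,\delta x^{j^*}$ the flux response to a perturbation of the rate of reaction $j^*$.) *)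

theory Defs
  imports "HOL-Analysis.Analysis"
begin

text \<open>Metabolites are the elements of a finite type 'm, reactions of a finite type 'e.
  Input stoichiometry y j m, output stoichiometry ybar j m.
  The indeterminates r_{jm} are modelled by real assignments r :: 'e => 'm => real;
  "nonzero algebraically" for a rational function in the r_{jm} is rendered as
  "nonzero at some real assignment where it is defined".\<close>

definition stoich :: "('e \<Rightarrow> 'm \<Rightarrow> real) \<Rightarrow> ('e \<Rightarrow> 'm \<Rightarrow> real) \<Rightarrow> real^'e::finite^'m::finite" where
  "stoich y ybar = (\<chi> m j. ybar j m - y j m)"

definition reactant :: "('e \<Rightarrow> 'm \<Rightarrow> real) \<Rightarrow> 'm \<Rightarrow> 'e \<Rightarrow> bool" where
  "reactant y m j \<longleftrightarrow> y j m \<noteq> 0"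

definition rate_matrix :: "('e \<Rightarrow> 'm \<Rightarrow> real) \<Rightarrow> ('e \<Rightarrow> 'm \<Rightarrow> real) \<Rightarrow> real^'m::finite^'e::finite" where
  "rate_matrix y r = (\<chi> j m. if reactant y m j then r j m else 0)"

definition regular :: "('e::finite \<Rightarrow> 'm::finite \<Rightarrow> real) \<Rightarrow> ('e \<Rightarrow> 'm \<Rightarrow> real) \<Rightarrow> bool" where
  "regular y ybar \<longleftrightarrow> (\<exists>r. det (stoich y ybar ** rate_matrix y r) \<noteq> 0)"

definition Bmat :: "('e::finite \<Rightarrow> 'm::finite \<Rightarrow> real) \<Rightarrow> ('e \<Rightarrow> 'm \<Rightarrow> real) \<Rightarrow> ('e \<Rightarrow> 'm \<Rightarrow> real)
    \<Rightarrow> real^('e + 'm)^('e + 'm)" where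
  "Bmat y ybar r = (\<chi> a b. case (a, b) of
      (Inl j, Inl j') \<Rightarrow> (if j = j' then -1 else 0)
    | (Inl j, Inr m) \<Rightarrow> rate_matrix y r $ j $ m
    | (Inr m, Inl j) \<Rightarrow> stoich y ybar $ m $ j
    | (Inr m, Inr m') \<Rightarrow> 0)"

definition zvec :: "('e::finite \<Rightarrow> 'm::finite \<Rightarrow> real) \<Rightarrow> ('e \<Rightarrow> 'm \<Rightarrow> real) \<Rightarrow> ('e \<Rightarrow> 'm \<Rightarrow> real)
    \<Rightarrow> 'e + 'm \<Rightarrow> real^('e + 'm)" where
  "zvec y ybar r \<alpha> = - (matrix_inv (Bmat y ybar r) *v axis \<alpha> 1)"

text \<open>alpha influences beta: the component z^alpha_beta is a nonzero rational function,
  i.e. nonzero at some assignment where B is invertible.\<close>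
definition influences :: "('e::finite \<Rightarrow> 'm::finite \<Rightarrow> real) \<Rightarrow> ('e \<Rightarrow> 'm \<Rightarrow> real)
    \<Rightarrow> 'e + 'm \<Rightarrow> 'e + 'm \<Rightarrow> bool" where
  "influences y ybar \<alpha> \<beta> \<longleftrightarrow>
     (\<exists>r. invertible (Bmat y ybar r) \<and> zvec y ybar r \<alpha> $ \<beta> \<noteq> 0)"

definition child_selection :: "('e \<Rightarrow> 'm \<Rightarrow> real) \<Rightarrow> ('m \<Rightarrow> 'e) \<Rightarrow> bool" where
  "child_selection y J \<longleftrightarrow> inj J \<and> (\<forall>m. reactant y m (J m))"

text \<open>E' selects an S-basis: |E'| = M and det S^{E'} \<noteq> 0 (columns of E' listed via a bijection
  from the metabolites; the choice of order only affects the sign).\<close>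
definition selects_basis :: "('e::finite \<Rightarrow> 'm::finite \<Rightarrow> real) \<Rightarrow> ('e \<Rightarrow> 'm \<Rightarrow> real) \<Rightarrow> 'e set \<Rightarrow> bool" where
  "selects_basis y ybar E' \<longleftrightarrow> card E' = CARD('m) \<and>
     (\<exists>f :: 'm \<Rightarrow> 'e. bij_betw f UNIV E' \<and> det (\<chi> i k. stoich y ybar $ i $ f k) \<noteq> 0)"

end

theory Submission
  imports Defs "HOL-Computational_Algebra.Polynomial" "HOL-Library.FuncSet"
begin

lemma t1: fixes a b :: "'e::finite \<Rightarrow> real"
  shows "(\<Sum>j\<in>UNIV. a j * ((if j = k then 1 else 0) + b j)) = a k + (\<Sum>j\<in>UNIV. a j * b j)"
proof -
  have "(\<Sum>j\<in>UNIV. a j * ((if j = k then 1 else 0) + b j)) = (\<Sum>j\<in>UNIV. (if j = k then a j else 0) + a j * b j)"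
    by (rule sum.cong) (auto simp: algebra_simps)
  then show ?thesis by (simp add: sum.distrib)
qed
lemma t2: fixes A :: "real^'n::finite^'m::finite" shows "A *v (- x) = - (A *v x)"
  by (simp add: vec_eq_iff matrix_vector_mult_def sum_negf)


lemma det_nz_iff_ker:
  fixes A :: "real^'n::finite^'n"
  shows "det A \<noteq> 0 \<longleftrightarrow> (\<forall>v. A *v v = 0 \<longrightarrow> v = 0)"
proof -
  have "det (matrix (\<lambda>x. A *v x)) \<noteq> 0 \<longleftrightarrow> inj (\<lambda>x. A *v x)"
    by (rule det_nz_iff_inj) (simp add: matrix_vector_mul_linear)
  also have "\<dots> \<longleftrightarrow> (\<forall>v. A *v v = 0 \<longrightarrow> v = 0)"
    by (rule linear_injective_0) (simp add: matrix_vector_mul_linear)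
  finally show ?thesis by simp
qed

lemma invertible_ker:
  fixes A :: "real^'n::finite^'n"
  shows "invertible A \<longleftrightarrow> (\<forall>v. A *v v = 0 \<longrightarrow> v = 0)"
  using det_nz_iff_ker invertible_det_nz by blast

lemma matrix_inv_right:
  fixes A :: "real^'n::finite^'n"
  assumes "invertible A" shows "A ** matrix_inv A = mat 1"
  using assms unfolding invertible_def matrix_inv_def by (metis (mono_tags, lifting) someI_ex)

lemma det_rows_sum_gen:
  fixes a :: "'n::finite \<Rightarrow> 'j::finite \<Rightarrow> real^'n"
  shows "det (\<chi> i. \<Sum>j\<in>UNIV. a i j) = (\<Sum>f\<in>UNIV. det (\<chi> i. a i (f i)))"
proof -
  have "det (\<chi> i. \<Sum>j\<in>UNIV. a i j) = (\<Sum>p\<in>{p. p permutes UNIV}. of_int (sign p) * (\<Prod>i\<in>UNIV. \<Sum>j\<in>UNIV. a i j $ p i))"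
    by (simp add: det_def sum_component)
  also have "\<dots> = (\<Sum>p\<in>{p. p permutes UNIV}. of_int (sign p) * (\<Sum>f\<in>UNIV. \<Prod>i\<in>UNIV. a i (f i) $ p i))"
    by (subst prod_sum_PiE) (simp_all add: PiE_UNIV_domain)
  also have "\<dots> = (\<Sum>f\<in>UNIV. \<Sum>p\<in>{p. p permutes UNIV}. of_int (sign p) * (\<Prod>i\<in>UNIV. a i (f i) $ p i))"
    by (simp add: sum_distrib_left sum.swap[of _ "{p. p permutes UNIV}"])
  also have "\<dots> = (\<Sum>f\<in>UNIV. det (\<chi> i. a i (f i)))"
    by (simp add: det_def)
  finally show ?thesis .
qed

lemma det_expand:
  fixes A :: "real^'e::finite^'m::finite" and Rm :: "real^'m^'e"
  shows "det (A ** Rm) = (\<Sum>f\<in>UNIV. (\<Prod>m\<in>UNIV. Rm$(f m)$m) * det (\<chi> i k. A$i$(f k)))"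
proof -
  have tr: "transpose (A ** Rm) = (\<chi> m. \<Sum>j\<in>UNIV. Rm$j$m *s (\<chi> i. A$i$j))"
    by (simp add: vec_eq_iff transpose_def matrix_matrix_mult_def sum_component mult.commute)
  have "det (A ** Rm) = det (transpose (A ** Rm))" by simp
  also have "\<dots> = (\<Sum>f\<in>UNIV. det (\<chi> m. Rm$(f m)$m *s (\<chi> i. A$i$(f m))))"
    unfolding tr by (rule det_rows_sum_gen)
  also have "\<dots> = (\<Sum>f\<in>UNIV. (\<Prod>m\<in>UNIV. Rm$(f m)$m) * det (\<chi> m i. A$i$(f m)))"
    by (simp add: det_rows_mul)
  also have "\<dots> = (\<Sum>f\<in>UNIV. (\<Prod>m\<in>UNIV. Rm$(f m)$m) * det (\<chi> i k. A$i$(f k)))"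
  proof (rule sum.cong[OF refl])
    fix f :: "'m \<Rightarrow> 'e"
    have "(\<chi> m i. A$i$(f m)) = transpose (\<chi> i k. A$i$(f k))"
      by (simp add: vec_eq_iff transpose_def)
    then show "(\<Prod>m\<in>UNIV. Rm$(f m)$m) * det (\<chi> m i. A$i$(f m)) = (\<Prod>m\<in>UNIV. Rm$(f m)$m) * det (\<chi> i k. A$i$(f k))"
      by simp
  qed
  finally show ?thesis .
qed


lemma det_rank1_L:
  fixes a b :: "real^'n::finite"
  assumes "finite K" "k \<notin> K"
  shows "det (\<chi> i. if i = k then b else if i \<in> K then axis i 1 + a$i *s b else axis i (1::real)) = b$k"
  using assms
proof (induction K rule: finite_induct)
  case empty
  have "(\<chi> i. if i = k then b else if i \<in> {} then axis i 1 + a$i *s b else axis i (1::real))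
      = transpose (\<chi> i j. if j = k then b$i else (mat 1::real^'n^'n)$i$j)"
    by (simp add: vec_eq_iff transpose_def mat_def axis_def)
  moreover have "det (\<chi> i j. if j = k then b$i else (mat 1::real^'n^'n)$i$j) = b$k"
    using cramer_lemma[where A="mat 1 :: real^'n^'n" and k=k and x=b]
    unfolding matrix_vector_mul_lid by simp
  ultimately show ?case by simp
next
  case (insert k1 K)
  let ?c = "\<lambda>i. if i = k then b else if i \<in> K then axis i 1 + a$i *s b else axis i (1::real)"
  have k1: "k1 \<noteq> k" using insert by auto
  have "(\<chi> i. if i = k then b else if i \<in> insert k1 K then axis i 1 + a$i *s b else axis i (1::real))
     = (\<chi> i. if i = k1 then axis i 1 + a$i *s b else ?c i)"
    using k1 by (simp add: vec_eq_iff)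
  then have "det (\<chi> i. if i = k then b else if i \<in> insert k1 K then axis i 1 + a$i *s b else axis i (1::real))
     = det (\<chi> i. if i = k1 then axis i 1 else ?c i) + det (\<chi> i. if i = k1 then a$i *s b else ?c i)"
    by (simp add: det_row_add)
  also have "det (\<chi> i. if i = k1 then axis i 1 else ?c i) = b$k"
  proof -
    have "(\<chi> i. if i = k1 then axis i 1 else ?c i) = (\<chi> i. ?c i)"
      using insert k1 by (simp add: vec_eq_iff)
    then show ?thesis using insert by simp
  qed
  also have "det (\<chi> i. if i = k1 then a$i *s b else ?c i) = a$k1 * det (\<chi> i. if i = k1 then b else ?c i)"
  proof -
    have "(\<chi> i. if i = k1 then a$i *s b else ?c i) = (\<chi> i. if i = k1 then a$k1 *s b else ?c i)"
      by (simp add: vec_eq_iff)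
    then show ?thesis by (simp add: det_row_mul)
  qed
  also have "det (\<chi> i. if i = k1 then b else ?c i) = 0"
    by (rule det_identical_rows[of k1 k]) (use k1 in \<open>simp_all add: row_def vec_eq_iff\<close>)
  finally show ?case by simp
qed

lemma det_rank1_P:
  fixes a b :: "real^'n::finite"
  assumes "finite K"
  shows "det (\<chi> i. if i \<in> K then axis i 1 + a$i *s b else axis i (1::real)) = 1 + (\<Sum>i\<in>K. a$i * b$i)"
  using assms
proof (induction K rule: finite_induct)
  case empty
  have "(\<chi> i. if i \<in> {} then axis i 1 + a$i *s b else axis i (1::real)) = mat 1"
    by (simp add: vec_eq_iff mat_def axis_def)
  then show ?case by simp
next
  case (insert k K)
  let ?c = "\<lambda>i. if i \<in> K then axis i 1 + a$i *s b else axis i (1::real)"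
  have "(\<chi> i. if i \<in> insert k K then axis i 1 + a$i *s b else axis i (1::real))
     = (\<chi> i. if i = k then axis i 1 + a$i *s b else ?c i)"
    by (simp add: vec_eq_iff)
  then have "det (\<chi> i. if i \<in> insert k K then axis i 1 + a$i *s b else axis i (1::real))
     = det (\<chi> i. if i = k then axis i 1 else ?c i) + det (\<chi> i. if i = k then a$i *s b else ?c i)"
    by (simp add: det_row_add)
  also have "det (\<chi> i. if i = k then axis i 1 else ?c i) = 1 + (\<Sum>i\<in>K. a$i * b$i)"
  proof -
    have "(\<chi> i. if i = k then axis i 1 else ?c i) = (\<chi> i. ?c i)"
      using insert by (simp add: vec_eq_iff)
    then show ?thesis using insert by simp
  qed
  also have "det (\<chi> i. if i = k then a$i *s b else ?c i) = a$k * det (\<chi> i. if i = k then b else ?c i)"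
  proof -
    have "(\<chi> i. if i = k then a$i *s b else ?c i) = (\<chi> i. if i = k then a$k *s b else ?c i)"
      by (simp add: vec_eq_iff)
    then show ?thesis by (simp add: det_row_mul)
  qed
  also have "det (\<chi> i. if i = k then b else ?c i) = b$k"
    using det_rank1_L[OF insert(1,2), of b a] by simp
  finally show ?case using insert by simp
qed

lemma det_rank1:
  fixes a b :: "real^'n::finite"
  shows "det (mat 1 + (\<chi> i j. a$i * b$j)) = 1 + (\<Sum>i\<in>UNIV. a$i * b$i)"
proof -
  have "mat 1 + (\<chi> i j. a$i * b$j) = (\<chi> i. if i \<in> UNIV then axis i 1 + a$i *s b else axis i (1::real))"
    by (simp add: vec_eq_iff mat_def axis_def)
  then show ?thesis using det_rank1_P[of UNIV a b] by simp
qed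


lemma sum_UNIV_Plus:
  fixes g :: "'a::finite + 'b::finite \<Rightarrow> real"
  shows "(\<Sum>b\<in>UNIV. g b) = (\<Sum>j\<in>UNIV. g (Inl j)) + (\<Sum>m\<in>UNIV. g (Inr m))"
  by (simp add: UNIV_Plus_UNIV[symmetric] sum.Plus comp_def del: UNIV_Plus_UNIV)

lemma B_Inl:
  "(Bmat y ybar r *v w) $ Inl j = - (w $ Inl j) + (\<Sum>m\<in>UNIV. rate_matrix y r $ j $ m * w $ Inr m)"
proof -
  have "(\<Sum>j'\<in>UNIV. Bmat y ybar r $ Inl j $ Inl j' * w $ Inl j') = (\<Sum>j'\<in>UNIV. if j = j' then - w $ Inl j' else 0)"
    by (rule sum.cong) (auto simp: Bmat_def)
  also have "\<dots> = - w $ Inl j" by simp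
  finally show ?thesis by (simp add: matrix_vector_mult_def sum_UNIV_Plus Bmat_def)
qed

lemma B_Inr:
  "(Bmat y ybar r *v w) $ Inr m = (\<Sum>j\<in>UNIV. stoich y ybar $ m $ j * w $ Inl j)"
  by (simp add: matrix_vector_mult_def sum_UNIV_Plus Bmat_def)

lemma B_inv_iff:
  fixes y ybar r :: "'e::finite \<Rightarrow> 'm::finite \<Rightarrow> real"
  shows "invertible (Bmat y ybar r) \<longleftrightarrow> det (stoich y ybar ** rate_matrix y r) \<noteq> 0"
proof
  let ?S = "stoich y ybar" and ?R = "rate_matrix y r"
  assume inv: "invertible (Bmat y ybar r)"
  show "det (?S ** ?R) \<noteq> 0" unfolding det_nz_iff_ker
  proof (intro allI impI)
    fix v assume v: "(?S ** ?R) *v v = 0"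
    define w :: "real^('e+'m)" where "w = (\<chi> b. case b of Inl j \<Rightarrow> (?R *v v)$j | Inr m \<Rightarrow> v$m)"
    have "Bmat y ybar r *v w = 0"
    proof (subst vec_eq_iff, intro allI)
      fix b show "(Bmat y ybar r *v w) $ b = 0 $ b"
      proof (cases b)
        case (Inl j) then show ?thesis
          by (simp only: B_Inl) (simp add: w_def matrix_vector_mult_def)
      next
        case (Inr m)
        have "(\<Sum>j\<in>UNIV. ?S $ m $ j * w $ Inl j) = (?S *v (?R *v v)) $ m"
          by (simp add: w_def matrix_vector_mult_def)
        also have "\<dots> = 0" using v by (simp add: matrix_vector_mul_assoc)
        finally show ?thesis using Inr by (simp add: B_Inr)
      qed
    qed
    then have "w = 0" using inv invertible_ker by blast
    then show "v = 0" by (simp add: vec_eq_iff w_def) (metis sum.case(2) vec_lambda_beta zero_index)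
  qed
next
  let ?S = "stoich y ybar" and ?R = "rate_matrix y r"
  assume d: "det (?S ** ?R) \<noteq> 0"
  show "invertible (Bmat y ybar r)" unfolding invertible_ker
  proof (intro allI impI)
    fix w assume w: "Bmat y ybar r *v w = 0"
    define x :: "real^'m" where "x = (\<chi> m. w $ Inr m)"
    define \<Phi> :: "real^'e" where "\<Phi> = (\<chi> j. w $ Inl j)"
    have 1: "\<Phi> = ?R *v x"
    proof (subst vec_eq_iff, intro allI)
      fix j have "(Bmat y ybar r *v w) $ Inl j = 0" using w by simp
      then show "\<Phi> $ j = (?R *v x) $ j" unfolding B_Inl by (simp add: \<Phi>_def x_def matrix_vector_mult_def)
    qed
    have 2: "?S *v \<Phi> = 0"
    proof (subst vec_eq_iff, intro allI)
      fix m have "(Bmat y ybar r *v w) $ Inr m = 0" using w by simp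
      then show "(?S *v \<Phi>) $ m = 0 $ m" unfolding B_Inr by (simp add: \<Phi>_def matrix_vector_mult_def)
    qed
    have "(?S ** ?R) *v x = 0" using 1 2 by (simp add: matrix_vector_mul_assoc[symmetric])
    then have "x = 0" using d det_nz_iff_ker by blast
    then have "\<Phi> = 0" using 1 by simp
    show "w = 0"
    proof (subst vec_eq_iff, intro allI)
      fix b show "w $ b = 0 $ b"
        using \<open>x = 0\<close> \<open>\<Phi> = 0\<close> by (cases b) (auto simp: vec_eq_iff x_def \<Phi>_def)
    qed
  qed
qed


lemma B_z:
  fixes y ybar r :: "'e::finite \<Rightarrow> 'm::finite \<Rightarrow> real"
  assumes inv: "invertible (Bmat y ybar r)"
  shows "Bmat y ybar r *v zvec y ybar r \<alpha> = - axis \<alpha> 1"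
proof -
  have "Bmat y ybar r *v (matrix_inv (Bmat y ybar r) *v axis \<alpha> 1) = axis \<alpha> 1"
    by (simp add: matrix_vector_mul_assoc matrix_inv_right[OF inv])
  then show ?thesis unfolding zvec_def
    by (simp add: t2)
qed

lemma key:
  fixes y ybar r :: "'e::finite \<Rightarrow> 'm::finite \<Rightarrow> real"
  assumes inv: "invertible (Bmat y ybar r)"
  shows "det ((\<chi> i j. if j = j' then stoich y ybar $i$j - stoich y ybar $i$js else stoich y ybar $i$j) ** rate_matrix y r)
     = det (stoich y ybar ** rate_matrix y r) * ((if j' = js then 0 else 1) + zvec y ybar r (Inl js) $ Inl j')"
proof -
  define S where "S = stoich y ybar"
  define R where "R = rate_matrix y r"
  define z where "z = zvec y ybar r (Inl js)"
  define x :: "real^'m" where "x = (\<chi> m. z $ Inr m)"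
  define S' where "S' = (\<chi> i j. if j = j' then S$i$j - S$i$js else S$i$j)"
  have Bz: "Bmat y ybar r *v z = - axis (Inl js) 1" unfolding z_def by (rule B_z[OF inv])
  have zl: "z $ Inl j = (if j = js then 1 else 0) + (R *v x) $ j" for j
  proof -
    have "(Bmat y ybar r *v z) $ Inl j = - (if j = js then 1 else 0)"
      using Bz by (simp add: axis_def)
    then show ?thesis unfolding B_Inl by (simp add: R_def x_def matrix_vector_mult_def)
  qed
  have SRx: "(S ** R) *v x = - (\<chi> i. S$i$js)"
  proof (subst vec_eq_iff, intro allI)
    fix m
    have "(Bmat y ybar r *v z) $ Inr m = 0" using Bz by (simp add: axis_def)
    then have "(\<Sum>j\<in>UNIV. S $ m $ j * ((if j = js then 1 else 0) + (R *v x) $ j)) = 0"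
      unfolding B_Inr S_def zl .
    then have "S$m$js + (\<Sum>j\<in>UNIV. S $ m $ j * (R *v x) $ j) = 0"
      by (simp only: t1)
    moreover have "(S *v (R *v x)) $ m = (\<Sum>j\<in>UNIV. S $ m $ j * (R *v x) $ j)"
      by (simp only: matrix_vector_mult_def vec_lambda_beta)
    ultimately show "((S ** R) *v x) $ m = (- (\<chi> i. S$i$js)) $ m"
      by (simp add: matrix_vector_mul_assoc[symmetric])
  qed
  define C :: "real^'m^'m" where "C = mat 1 + (\<chi> i k. x$i * R$j'$k)"
  have "S' ** R = (S ** R) ** C"
  proof -
    have "(S' ** R) $ i $ k = ((S ** R) ** C) $ i $ k" for i k
    proof -
      have "(S' ** R) $ i $ k = (\<Sum>j\<in>UNIV. S$i$j * R$j$k - (if j = j' then S$i$js * R$j'$k else 0))"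
        unfolding matrix_matrix_mult_def vec_lambda_beta by (rule sum.cong) (auto simp: S'_def algebra_simps)
      also have "\<dots> = (S ** R)$i$k - S$i$js * R$j'$k"
        by (simp add: sum_subtractf matrix_matrix_mult_def)
      also have "\<dots> = ((S ** R) ** C) $ i $ k"
      proof -
        have "(S ** R) ** C = (S ** R) + (S ** R) ** (\<chi> i k. x$i * R$j'$k)"
          by (simp add: C_def matrix_add_ldistrib)
        then have "((S ** R) ** C) $ i $ k = (S ** R)$i$k + ((S ** R) ** (\<chi> i k. x$i * R$j'$k)) $ i $ k"
          by simp
        also have "((S ** R) ** (\<chi> i k. x$i * R$j'$k)) $ i $ k = (\<Sum>l\<in>UNIV. (S ** R)$i$l * x$l) * R$j'$k"
          unfolding matrix_matrix_mult_def vec_lambda_beta sum_distrib_right by (simp add: mult.assoc)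
        also have "(\<Sum>l\<in>UNIV. (S ** R)$i$l * x$l) = ((S ** R) *v x) $ i"
          by (simp add: matrix_vector_mult_def)
        finally show ?thesis using SRx by simp
      qed
      finally show ?thesis .
    qed
    then show ?thesis by (simp add: vec_eq_iff)
  qed
  then have "det (S' ** R) = det (S ** R) * (1 + (\<Sum>i\<in>UNIV. x$i * R$j'$i))"
    by (simp add: det_mul C_def det_rank1[of x "R$j'", simplified])
  also have "(\<Sum>i\<in>UNIV. x$i * R$j'$i) = (R *v x) $ j'"
    by (simp add: matrix_vector_mult_def mult.commute)
  finally show ?thesis using zl[of j'] unfolding S'_def S_def R_def z_def by simp
qed


lemma generic:
  fixes a c :: "('m::finite \<Rightarrow> 'e::finite) \<Rightarrow> real" and p q :: "'e \<Rightarrow> 'm \<Rightarrow> real"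
  assumes p: "(\<Sum>f\<in>UNIV. (\<Prod>m\<in>UNIV. rate_matrix y p $ f m $ m) * a f) \<noteq> 0"
    and q: "(\<Sum>f\<in>UNIV. (\<Prod>m\<in>UNIV. rate_matrix y q $ f m $ m) * c f) \<noteq> 0"
  shows "\<exists>r. (\<Sum>f\<in>UNIV. (\<Prod>m\<in>UNIV. rate_matrix y r $ f m $ m) * a f) \<noteq> 0 \<and>
             (\<Sum>f\<in>UNIV. (\<Prod>m\<in>UNIV. rate_matrix y r $ f m $ m) * c f) \<noteq> 0"
proof -
  define rt where "rt = (\<lambda>t::real. \<lambda>j m. p j m + t * (q j m - p j m))"
  define Q where "Q = (\<lambda>j m. if reactant y m j then [:p j m, q j m - p j m:] else 0)"
  have ent: "rate_matrix y (rt t) $ j $ m = poly (Q j m) t" for t j m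
    by (simp add: rate_matrix_def rt_def Q_def algebra_simps)
  define P where "P = (\<lambda>b. \<Sum>f\<in>UNIV. smult (b f) (\<Prod>m\<in>UNIV. Q (f m) m))"
  have evalP: "(\<Sum>f\<in>UNIV. (\<Prod>m\<in>UNIV. rate_matrix y (rt t) $ f m $ m) * b f) = poly (P b) t" for b t
    by (simp add: P_def ent poly_sum poly_prod mult.commute)
  have "rt 0 = p" "rt 1 = q" by (auto simp: rt_def)
  then have P0: "poly (P a) 0 \<noteq> 0" and P1: "poly (P c) 1 \<noteq> 0"
    using p q evalP[of 0 a] evalP[of 1 c] by auto
  then have "P a \<noteq> 0" "P c \<noteq> 0" by auto
  then have fin: "finite ({t. poly (P a) t = 0} \<union> {t. poly (P c) t = 0})"
    by (simp add: poly_roots_finite)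
  obtain t where "t \<notin> {t. poly (P a) t = 0} \<union> {t. poly (P c) t = 0}"
    using ex_new_if_finite[OF infinite_UNIV_char_0 fin] by blast
  then show ?thesis using evalP[of t a] evalP[of t c] by (intro exI[of _ "rt t"]) auto
qed

lemma N_expand:
  fixes S :: "real^'e::finite^'m::finite" and R :: "real^'m^'e"
  shows "det ((\<chi> i j. if j = j' then S$i$j - S$i$js else S$i$j) ** R) - (if j' = js then 0 else det (S ** R))
    = (\<Sum>f\<in>UNIV. (\<Prod>m\<in>UNIV. R$(f m)$m) *
        (det (\<chi> i k. (\<chi> i j. if j = j' then S$i$j - S$i$js else S$i$j)$i$(f k)) - (if j' = js then 0 else det (\<chi> i k. S$i$(f k)))))"
  by (simp only: det_expand) (simp add: sum_subtractf right_diff_distrib)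

lemma colsel_noninj:
  fixes A :: "real^'e::finite^'m::finite"
  assumes "\<not> inj f"
  shows "det (\<chi> i k. A$i$(f k)) = 0"
proof -
  obtain k1 k2 where "k1 \<noteq> k2" "f k1 = f k2" using assms unfolding inj_def by blast
  moreover have "column k1 (\<chi> i k. A$i$(f k)) = column k2 (\<chi> i k. A$i$(f k))"
    using \<open>f k1 = f k2\<close> unfolding column_def by simp
  ultimately show ?thesis by (intro det_identical_columns[of k1 k2])
qed

lemma indicator_prod:
  assumes "\<forall>m. reactant y m (f0 m)"
  shows "(\<Prod>m\<in>UNIV. rate_matrix y (\<lambda>j m. if j = f0 m then 1 else 0) $ f m $ m) = (if f = f0 then 1 else 0)"
proof (cases "f = f0")
  case True then show ?thesis using assms by (simp add: rate_matrix_def)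
next
  case False
  then obtain m where "f m \<noteq> f0 m" by auto
  then have "rate_matrix y (\<lambda>j m. if j = f0 m then 1 else 0) $ f m $ m = 0"
    by (simp add: rate_matrix_def)
  then show ?thesis using False by (metis (no_types, lifting) UNIV_I finite prod_zero)
qed

lemma basis_iff:
  fixes y ybar :: "'e::finite \<Rightarrow> 'm::finite \<Rightarrow> real"
  assumes "inj f"
  shows "det (\<chi> i k. stoich y ybar $i$(f k)) \<noteq> 0 \<longleftrightarrow> selects_basis y ybar (range f)"
proof
  assume "det (\<chi> i k. stoich y ybar $i$(f k)) \<noteq> 0"
  moreover have "bij_betw f UNIV (range f)" using assms by (simp add: bij_betw_def)
  moreover have "card (range f) = CARD('m)" using assms by (simp add: card_image)
  ultimately show "selects_basis y ybar (range f)" unfolding selects_basis_def by blast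
next
  assume "selects_basis y ybar (range f)"
  then obtain g where g: "bij_betw g UNIV (range f)" and d: "det (\<chi> i k. stoich y ybar $i$(g k)) \<noteq> 0"
    unfolding selects_basis_def by blast
  define p where "p = inv f \<circ> g"
  have fg: "f (p k) = g k" for k
    using g assms unfolding p_def bij_betw_def by (metis comp_apply f_inv_into_f rangeI)
  have "bij p" unfolding p_def
    using g assms by (metis bij_betw_def bij_betw_inv_into bij_betw_trans inj_on_imp_bij_betw)
  then have pp: "p permutes UNIV" by (intro bij_imp_permutes) auto
  have "det (\<chi> i k. stoich y ybar $i$(g k)) = det (\<chi> i k. (\<chi> i k. stoich y ybar $i$(f k))$i$(p k))"
    by (simp add: fg)
  also have "\<dots> = of_int (sign p) * det (\<chi> i k. stoich y ybar $i$(f k))"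
    by (rule det_permute_columns[OF pp])
  finally show "det (\<chi> i k. stoich y ybar $i$(f k)) \<noteq> 0" using d by auto
qed


lemma colmod:
  fixes S :: "real^'e::finite^'m::finite"
  assumes inj: "inj f" and fm: "f m = j'" and ne: "j' \<noteq> js"
  shows "det (\<chi> i k. (\<chi> i j. if j = j' then S$i$j - S$i$js else S$i$j)$i$(f k))
       = det (\<chi> i k. S$i$(f k)) - det (\<chi> i k. S$i$((f(m:=js)) k))"
proof -
  let ?c = "\<lambda>k. (\<chi> i. S$i$(f k)) :: real^'m"
  have fk: "k \<noteq> m \<Longrightarrow> f k \<noteq> j'" for k using inj fm by (auto dest: injD)
  have "transpose (\<chi> i k. (\<chi> i j. if j = j' then S$i$j - S$i$js else S$i$j)$i$(f k))
      = (\<chi> k. if k = m then (\<chi> i. S$i$j') + (-1) *s (\<chi> i. S$i$js) else ?c k)"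
    using fk fm by (auto simp: vec_eq_iff transpose_def)
  then have "det (\<chi> i k. (\<chi> i j. if j = j' then S$i$j - S$i$js else S$i$j)$i$(f k))
     = det (\<chi> k. if k = m then (\<chi> i. S$i$j') else ?c k) + det (\<chi> k. if k = m then (-1) *s (\<chi> i. S$i$js) else ?c k)"
    by (simp only: det_row_add flip: det_transpose[of "\<chi> i k. (\<chi> i j. if j = j' then S$i$j - S$i$js else S$i$j)$i$(f k)"])
  also have "det (\<chi> k. if k = m then (-1) *s (\<chi> i. S$i$js) else ?c k) = - det (\<chi> k. if k = m then (\<chi> i. S$i$js) else ?c k)"
    by (simp add: det_row_mul)
  also have "(\<chi> k. if k = m then (\<chi> i. S$i$j') else ?c k) = transpose (\<chi> i k. S$i$(f k))"
    using fm by (auto simp: vec_eq_iff transpose_def)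
  also have "(\<chi> k. if k = m then (\<chi> i. S$i$js) else ?c k) = transpose (\<chi> i k. S$i$((f(m:=js)) k))"
    by (auto simp: vec_eq_iff transpose_def)
  finally show ?thesis by simp
qed

lemma sum_ind:
  fixes g :: "'a::finite \<Rightarrow> real"
  shows "(\<Sum>f\<in>UNIV. (if f = f0 then 1 else 0) * g f) = g f0"
proof -
  have "(\<Sum>f\<in>UNIV. (if f = f0 then 1 else 0) * g f) = (\<Sum>f\<in>UNIV. if f = f0 then g f else 0)"
    by (rule sum.cong) auto
  then show ?thesis by simp
qed

lemma infl_char:
  fixes y ybar :: "'e::finite \<Rightarrow> 'm::finite \<Rightarrow> real"
  assumes reg: "regular y ybar"
  shows "influences y ybar (Inl js) (Inl j') \<longleftrightarrow>
    (\<exists>f. child_selection y f \<and>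
      det (\<chi> i k. (\<chi> i j. if j = j' then stoich y ybar$i$j - stoich y ybar$i$js else stoich y ybar$i$j)$i$(f k))
        - (if j' = js then 0 else det (\<chi> i k. stoich y ybar$i$(f k))) \<noteq> 0)"
    (is "?L \<longleftrightarrow> (\<exists>f. child_selection y f \<and> ?c f \<noteq> 0)")
proof -
  define S where "S = stoich y ybar"
  define S' where "S' = (\<chi> i j. if j = j' then S$i$j - S$i$js else S$i$j)"
  have Nz: "det (S' ** rate_matrix y r) - (if j' = js then 0 else det (S ** rate_matrix y r))
      = det (S ** rate_matrix y r) * zvec y ybar r (Inl js) $ Inl j'"
    if "invertible (Bmat y ybar r)" for r
    using key[OF that, of j' js] unfolding S_def S'_def by (cases "j' = js") (auto simp: algebra_simps)
  have Nexp: "det (S' ** rate_matrix y r) - (if j' = js then 0 else det (S ** rate_matrix y r))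
      = (\<Sum>f\<in>UNIV. (\<Prod>m\<in>UNIV. rate_matrix y r $(f m)$m) * ?c f)" for r
    unfolding S'_def S_def by (rule N_expand)
  show ?thesis
  proof
    assume ?L
    then obtain r where inv: "invertible (Bmat y ybar r)" and z: "zvec y ybar r (Inl js) $ Inl j' \<noteq> 0"
      unfolding influences_def by blast
    have "det (S ** rate_matrix y r) \<noteq> 0" using inv B_inv_iff S_def by blast
    then have "(\<Sum>f\<in>UNIV. (\<Prod>m\<in>UNIV. rate_matrix y r $(f m)$m) * ?c f) \<noteq> 0"
      using Nz[OF inv] Nexp[of r] z by simp
    then obtain f where f: "(\<Prod>m\<in>UNIV. rate_matrix y r $(f m)$m) * ?c f \<noteq> 0"
      by (meson sum.neutral)
    then have cf: "?c f \<noteq> 0" by auto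
    have "\<forall>m. reactant y m (f m)"
    proof
      fix m
      have "rate_matrix y r $(f m)$m \<noteq> 0" using f by auto
      then show "reactant y m (f m)" by (auto simp: rate_matrix_def split: if_splits)
    qed
    moreover have "inj f"
    proof (rule ccontr)
      assume "\<not> inj f"
      have h1: "det (\<chi> i k. (\<chi> i j. if j = j' then stoich y ybar$i$j - stoich y ybar$i$js else stoich y ybar$i$j)$i$(f k)) = 0"
        by (rule colsel_noninj[OF \<open>\<not> inj f\<close>])
      have h2: "det (\<chi> i k. stoich y ybar$i$(f k)) = 0"
        by (rule colsel_noninj[OF \<open>\<not> inj f\<close>])
      have "?c f = 0" unfolding h1 h2 by simp
      then show False using cf by simp
    qed
    ultimately show "\<exists>f. child_selection y f \<and> ?c f \<noteq> 0" using cf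
      unfolding child_selection_def by blast
  next
    assume "\<exists>f. child_selection y f \<and> ?c f \<noteq> 0"
    then obtain f0 where f0: "child_selection y f0" "?c f0 \<noteq> 0" by blast
    define p where "p = (\<lambda>j m. if j = f0 m then 1 else (0::real))"
    have "(\<Sum>f\<in>UNIV. (\<Prod>m\<in>UNIV. rate_matrix y p $(f m)$m) * ?c f) = ?c f0"
    proof -
      have r: "\<forall>m. reactant y m (f0 m)" using f0(1) unfolding child_selection_def by blast
      show ?thesis unfolding p_def indicator_prod[OF r] by (rule sum_ind)
    qed
    then have P: "(\<Sum>f\<in>UNIV. (\<Prod>m\<in>UNIV. rate_matrix y p $(f m)$m) * ?c f) \<noteq> 0" using f0 by simp
    obtain q where "det (S ** rate_matrix y q) \<noteq> 0" using reg unfolding regular_def S_def by blast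
    then have Q: "(\<Sum>f\<in>UNIV. (\<Prod>m\<in>UNIV. rate_matrix y q $(f m)$m) * det (\<chi> i k. S$i$(f k))) \<noteq> 0"
      by (simp add: det_expand)
    obtain r where r1: "(\<Sum>f\<in>UNIV. (\<Prod>m\<in>UNIV. rate_matrix y r $(f m)$m) * ?c f) \<noteq> 0"
      and r2: "(\<Sum>f\<in>UNIV. (\<Prod>m\<in>UNIV. rate_matrix y r $(f m)$m) * det (\<chi> i k. S$i$(f k))) \<noteq> 0"
      using generic[OF P Q] by blast
    have d: "det (S ** rate_matrix y r) \<noteq> 0" using r2 by (simp add: det_expand)
    then have inv: "invertible (Bmat y ybar r)" using B_inv_iff S_def by blast
    have "zvec y ybar r (Inl js) $ Inl j' \<noteq> 0" using Nz[OF inv] Nexp[of r] r1 by auto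
    then show ?L unfolding influences_def using inv by blast
  qed
qed



lemma ci:
  fixes S :: "real^'e::finite^'m::finite"
  assumes inj: "inj f"
  shows "det (\<chi> i k. (\<chi> i j. if j = js then S$i$j - S$i$js else S$i$j)$i$(f k)) - (if js = js then 0 else det (\<chi> i k. S$i$(f k))) \<noteq> 0
     \<longleftrightarrow> js \<notin> range f \<and> det (\<chi> i k. S$i$(f k)) \<noteq> 0"
proof (cases "js \<in> range f")
  case True
  then obtain m where m: "f m = js" by auto
  have "column m (\<chi> i k. (\<chi> i j. if j = js then S$i$j - S$i$js else S$i$j)$i$(f k)) = 0"
    using m by (simp add: column_def vec_eq_iff)
  then have "det (\<chi> i k. (\<chi> i j. if j = js then S$i$j - S$i$js else S$i$j)$i$(f k)) = 0"
    by (rule det_zero_column(1))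
  then show ?thesis using True by simp
next
  case False
  then have "(\<chi> i k. (\<chi> i j. if j = js then S$i$j - S$i$js else S$i$j)$i$(f k)) = (\<chi> i k. S$i$(f k))"
    by (auto simp: vec_eq_iff)
  then show ?thesis using False by simp
qed

lemma cii:
  fixes S :: "real^'e::finite^'m::finite"
  assumes inj: "inj f" and ne: "j' \<noteq> js"
  shows "det (\<chi> i k. (\<chi> i j. if j = j' then S$i$j - S$i$js else S$i$j)$i$(f k)) - (if j' = js then 0 else det (\<chi> i k. S$i$(f k))) \<noteq> 0
     \<longleftrightarrow> js \<notin> range f \<and> (\<exists>m. f m = j' \<and> det (\<chi> i k. S$i$((f(m:=js)) k)) \<noteq> 0)"
proof (cases "j' \<in> range f")
  case False
  then have "(\<chi> i k. (\<chi> i j. if j = j' then S$i$j - S$i$js else S$i$j)$i$(f k)) = (\<chi> i k. S$i$(f k))"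
    by (auto simp: vec_eq_iff)
  then have z: "det (\<chi> i k. (\<chi> i j. if j = j' then S$i$j - S$i$js else S$i$j)$i$(f k)) - (if j' = js then 0 else det (\<chi> i k. S$i$(f k))) = 0"
    using ne by simp
  have nm: "\<not> (\<exists>m. f m = j')" using False by auto
  show ?thesis unfolding z using nm by auto
next
  case True
  then obtain m where m: "f m = j'" by auto
  have eq: "det (\<chi> i k. (\<chi> i j. if j = j' then S$i$j - S$i$js else S$i$j)$i$(f k)) - (if j' = js then 0 else det (\<chi> i k. S$i$(f k)))
     = - det (\<chi> i k. S$i$((f(m:=js)) k))"
    using colmod[OF inj m ne] ne by simp
  have uniq: "f m' = j' \<Longrightarrow> m' = m" for m' using inj m by (auto dest: injD)
  show ?thesis
  proof (cases "js \<in> range f")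
    case True
    then obtain m2 where m2: "f m2 = js" by auto
    then have "m2 \<noteq> m" using m ne by auto
    then have "\<not> inj (f(m:=js))" using m2 unfolding inj_def
      by (metis fun_upd_other fun_upd_same)
    then have "det (\<chi> i k. S$i$((f(m:=js)) k)) = 0" by (rule colsel_noninj)
    then show ?thesis using eq True by simp
  next
    case False
    show ?thesis unfolding eq
    proof
      assume "- det (\<chi> i k. S$i$((f(m:=js)) k)) \<noteq> 0"
      then show "js \<notin> range f \<and> (\<exists>m. f m = j' \<and> det (\<chi> i k. S$i$((f(m:=js)) k)) \<noteq> 0)"
        using False m by auto
    next
      assume "js \<notin> range f \<and> (\<exists>m. f m = j' \<and> det (\<chi> i k. S$i$((f(m:=js)) k)) \<noteq> 0)"
      then obtain m' where "f m' = j'" "det (\<chi> i k. S$i$((f(m':=js)) k)) \<noteq> 0" by blast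
      then show "- det (\<chi> i k. S$i$((f(m:=js)) k)) \<noteq> 0" using uniq by force
    qed
  qed
qed

theorem theorem2p2:
  fixes y ybar :: "'e::finite \<Rightarrow> 'm::finite \<Rightarrow> real"
  assumes nonneg_in: "\<And>j m. y j m \<ge> 0"
    and nonneg_out: "\<And>j m. ybar j m \<ge> 0"
    and full_rank: "rank (stoich y ybar) = CARD('m)"
    and reg: "regular y ybar"
  shows "(influences y ybar (Inl jstar) (Inl jstar) \<longleftrightarrow>
            (\<exists>J. child_selection y J \<and> jstar \<notin> range J \<and> selects_basis y ybar (range J)))
       \<and> (\<forall>j'. j' \<noteq> jstar \<longrightarrow>
            (influences y ybar (Inl jstar) (Inl j') \<longleftrightarrow>
              (\<exists>J. child_selection y J \<and> jstar \<notin> range J \<and> j' \<in> range J \<and>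
                   selects_basis y ybar (insert jstar (range J - {j'})))))"
proof (intro conjI allI impI)
  show "influences y ybar (Inl jstar) (Inl jstar) \<longleftrightarrow>
            (\<exists>J. child_selection y J \<and> jstar \<notin> range J \<and> selects_basis y ybar (range J))"
    unfolding infl_char[OF reg, of jstar jstar]
  proof (intro iffI; elim exE conjE)
    fix f assume cs: "child_selection y f" and
      c: "det (\<chi> i k. (\<chi> i j. if j = jstar then stoich y ybar$i$j - stoich y ybar$i$jstar else stoich y ybar$i$j)$i$(f k))
        - (if jstar = jstar then 0 else det (\<chi> i k. stoich y ybar$i$(f k))) \<noteq> 0"
    have inj: "inj f" using cs child_selection_def by blast
    show "\<exists>J. child_selection y J \<and> jstar \<notin> range J \<and> selects_basis y ybar (range J)"
      using c unfolding ci[OF inj] basis_iff[OF inj] using cs by blast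
  next
    fix f assume cs: "child_selection y f" and nr: "jstar \<notin> range f" and b: "selects_basis y ybar (range f)"
    have inj: "inj f" using cs child_selection_def by blast
    show "\<exists>f. child_selection y f \<and>
      det (\<chi> i k. (\<chi> i j. if j = jstar then stoich y ybar$i$j - stoich y ybar$i$jstar else stoich y ybar$i$j)$i$(f k))
        - (if jstar = jstar then 0 else det (\<chi> i k. stoich y ybar$i$(f k))) \<noteq> 0"
    proof (intro exI conjI)
      show "child_selection y f" by (rule cs)
      show "det (\<chi> i k. (\<chi> i j. if j = jstar then stoich y ybar$i$j - stoich y ybar$i$jstar else stoich y ybar$i$j)$i$(f k))
        - (if jstar = jstar then 0 else det (\<chi> i k. stoich y ybar$i$(f k))) \<noteq> 0"
        unfolding ci[OF inj] basis_iff[OF inj] using nr b by blast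
    qed
  qed
next
  fix j' assume ne: "j' \<noteq> jstar"
  have per: "(det (\<chi> i k. (\<chi> i j. if j = j' then stoich y ybar$i$j - stoich y ybar$i$jstar else stoich y ybar$i$j)$i$(f k))
        - (if j' = jstar then 0 else det (\<chi> i k. stoich y ybar$i$(f k))) \<noteq> 0)
      \<longleftrightarrow> (jstar \<notin> range f \<and> j' \<in> range f \<and> selects_basis y ybar (insert jstar (range f - {j'})))"
    if inj: "inj f" for f
  proof -
    have "(jstar \<notin> range f \<and> (\<exists>m. f m = j' \<and> det (\<chi> i k. stoich y ybar$i$((f(m:=jstar)) k)) \<noteq> 0))
        \<longleftrightarrow> (jstar \<notin> range f \<and> j' \<in> range f \<and> selects_basis y ybar (insert jstar (range f - {j'})))"
    proof (cases "jstar \<in> range f")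
      case False
      have "(\<exists>m. f m = j' \<and> det (\<chi> i k. stoich y ybar$i$((f(m:=jstar)) k)) \<noteq> 0)
          \<longleftrightarrow> j' \<in> range f \<and> selects_basis y ybar (insert jstar (range f - {j'}))"
      proof
        assume "\<exists>m. f m = j' \<and> det (\<chi> i k. stoich y ybar$i$((f(m:=jstar)) k)) \<noteq> 0"
        then obtain m where m: "f m = j'" and d: "det (\<chi> i k. stoich y ybar$i$((f(m:=jstar)) k)) \<noteq> 0" by blast
        have inj2: "inj (f(m:=jstar))" using inj False unfolding inj_def by (auto split: if_splits)
        have rg: "range (f(m:=jstar)) = insert jstar (range f - {j'})"
          using inj m by (auto simp: image_def dest: injD split: if_splits)
        show "j' \<in> range f \<and> selects_basis y ybar (insert jstar (range f - {j'}))"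
          using d m basis_iff[OF inj2] rg by auto
      next
        assume a: "j' \<in> range f \<and> selects_basis y ybar (insert jstar (range f - {j'}))"
        then obtain m where m: "f m = j'" by auto
        have inj2: "inj (f(m:=jstar))" using inj False unfolding inj_def by (auto split: if_splits)
        have rg: "range (f(m:=jstar)) = insert jstar (range f - {j'})"
          using inj m by (auto simp: image_def dest: injD split: if_splits)
        show "\<exists>m. f m = j' \<and> det (\<chi> i k. stoich y ybar$i$((f(m:=jstar)) k)) \<noteq> 0"
          using a m basis_iff[OF inj2] rg by auto
      qed
      then show ?thesis using False by blast
    qed simp
    then show ?thesis using cii[OF inj ne, of "stoich y ybar"] by blast
  qed
  show "influences y ybar (Inl jstar) (Inl j') \<longleftrightarrow>
              (\<exists>J. child_selection y J \<and> jstar \<notin> range J \<and> j' \<in> range J \<and>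
                   selects_basis y ybar (insert jstar (range J - {j'})))"
    unfolding infl_char[OF reg, of jstar j'] using per unfolding child_selection_def by blast
qed


end
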